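(* In the database model described in the context, assume $\pi_{\mathcal D}>0$ and let $0\le\alpha\le1$. Then the random set $\mathcal D^\alpha$ satisfies \[ P(R\in\mathcal D^\alpha\mid R\in\mathcal D)\ge\alpha. \] In particular, if $P(R\in\mathcal D)=1$, then $P(R\in\mathcal D^\alpha)\ge\alpha$.
   Context: Let $E$ be a countable set and let $S$, $G$ be $E$-valued random variables such that for every $e\in E$, $P(S=e)>0$ implies $P(G=e)>0$. For $e\in E$ define the likelihood ratio $LR(e)=P(S=e)/P(G=e)$ if $P(G=e)>0$ and $LR(e)=0$ otherwise. Database model: fix $N\ge1$. Let $R$ be a random variable with values in $\{0,1,\dots,N\}$; we write $R\in\mathcal D$ for $R\in\{1,\dots,N\}$ and $R\notin\mathcal D$ for $R=0$. Put $\pi_i=P(R=i)$ for $1\le i\le N$, $\pi_{\mathcal D}=\sum_{i=1}^N\pi_i$ and $\pi_0=1-\pi_{\mathcal D}=P(R=0)$. There are $E$-valued random variables $P_1,\dots,P_N$ such that conditionally on $R=i$ with $1\le i\le N$, they are independent, $P_i$ has the distribution of $S$ and $P_j$ ($j\ne i$) has the distribution of $G$; and conditionally on $R=0$ they are independent, each with the distribution of $G$. Set $\mathbf{LR}_{\mathcal D}=(LR(P_1),\dots,LR(P_N))$. The set $\mathcal D^\alpha$: given the realized vector $\mathbf{LR}_{\mathcal D}=\mathbf r=(r_1,\dots,r_N)$, order the indices $1,\dots,N$ by decreasing value of $r_i\pi_i$ (with any fixed deterministic tie-breaking rule), let $\mathcal D^k$ be the set of the first $k$ indices in this order, let $k_\alpha$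 be the smallest $k\in\{0,\dots,N\}$ with $\sum_{j\in\mathcal D^k}r_j\pi_j\ge\alpha\sum_{j=1}^N r_j\pi_j$, and set $\mathcal D^\alpha=\mathcal D^{k_\alpha}$ (a random subset of $\{1,\dots,N\}$ determined by $\mathbf{LR}_{\mathcal D}$). *)

theory Defs
  imports "HOL-Probability.Probability"
begin

definition LR :: "'e pmf \<Rightarrow> 'e pmf \<Rightarrow> 'e \<Rightarrow> real" where
  "LR S G e = (if pmf G e > 0 then pmf S e / pmf G e else 0)"

definition is_decr_order :: "nat \<Rightarrow> (nat \<Rightarrow> real) \<Rightarrow> (nat \<Rightarrow> real) \<Rightarrow> nat list \<Rightarrow> bool" where
  "is_decr_order N w r \<sigma> \<longleftrightarrow> distinct \<sigma> \<and> set \<sigma> = {1..N} \<and>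
     sorted_wrt (\<lambda>i j. r j * w j \<le> r i * w i) \<sigma>"

definition k_alpha :: "nat \<Rightarrow> (nat \<Rightarrow> real) \<Rightarrow> real \<Rightarrow> (nat \<Rightarrow> real) \<Rightarrow> nat list \<Rightarrow> nat" where
  "k_alpha N w \<alpha> r \<sigma> = (LEAST k. k \<le> N \<and>
     (\<Sum>j\<leftarrow>take k \<sigma>. r j * w j) \<ge> \<alpha> * (\<Sum>j=1..N. r j * w j))"

definition D_alpha :: "nat \<Rightarrow> (nat \<Rightarrow> real) \<Rightarrow> real \<Rightarrow> (nat \<Rightarrow> real) \<Rightarrow> nat list \<Rightarrow> nat set" where
  "D_alpha N w \<alpha> r \<sigma> = set (take (k_alpha N w \<alpha> r \<sigma>) \<sigma>)"

end

theory Submission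
  imports Defs
begin

lemma key_Dalpha:
  assumes ord: "is_decr_order N w r \<sigma>" and r: "\<And>j. r j \<ge> 0" and w: "\<And>j. w j \<ge> 0"
    and a0: "0 \<le> \<alpha>" and a1: "\<alpha> \<le> 1"
  shows "D_alpha N w \<alpha> r \<sigma> \<subseteq> {1..N}"
    and "\<alpha> * (\<Sum>j=1..N. r j * w j) \<le> (\<Sum>j\<in>D_alpha N w \<alpha> r \<sigma>. r j * w j)"
proof -
  have d: "distinct \<sigma>" and s: "set \<sigma> = {1..N}" using ord by (auto simp: is_decr_order_def)
  have len: "length \<sigma> = N" using distinct_card[OF d] s by simp
  show "D_alpha N w \<alpha> r \<sigma> \<subseteq> {1..N}" unfolding D_alpha_def using s set_take_subset by metis
  define f where "f = (\<lambda>j. r j * w j)"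
  have tot: "(\<Sum>j\<leftarrow>\<sigma>. f j) = (\<Sum>j=1..N. f j)"
    using sum_list_distinct_conv_sum_set[OF d, of f] s by simp
  have nn: "(\<Sum>j=1..N. f j) \<ge> 0" unfolding f_def by (intro sum_nonneg) (simp add: r w)
  have ex: "\<exists>k. k \<le> N \<and> (\<Sum>j\<leftarrow>take k \<sigma>. r j * w j) \<ge> \<alpha> * (\<Sum>j=1..N. r j * w j)"
  proof (intro exI conjI)
    show "N \<le> N" by simp
    have "\<alpha> * (\<Sum>j=1..N. f j) \<le> (\<Sum>j=1..N. f j)" using nn a1 by (simp add: mult_left_le_one_le a0)
    then show "(\<Sum>j\<leftarrow>take N \<sigma>. r j * w j) \<ge> \<alpha> * (\<Sum>j=1..N. r j * w j)"
      using tot len by (simp add: f_def)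
  qed
  have k: "(\<Sum>j\<leftarrow>take (k_alpha N w \<alpha> r \<sigma>) \<sigma>. r j * w j) \<ge> \<alpha> * (\<Sum>j=1..N. r j * w j)"
    unfolding k_alpha_def using LeastI_ex[OF ex] by blast
  have "(\<Sum>j\<leftarrow>take (k_alpha N w \<alpha> r \<sigma>) \<sigma>. r j * w j) = (\<Sum>j\<in>D_alpha N w \<alpha> r \<sigma>. r j * w j)"
    unfolding D_alpha_def by (rule sum_list_distinct_conv_sum_set) (simp add: d)
  with k show "\<alpha> * (\<Sum>j=1..N. r j * w j) \<le> (\<Sum>j\<in>D_alpha N w \<alpha> r \<sigma>. r j * w j)" by simp
qed

theorem mainTheorem4:
  fixes M :: "'a measure" and N :: nat and R :: "'a \<Rightarrow> nat"
    and P :: "nat \<Rightarrow> 'a \<Rightarrow> 'e::countable" and S G :: "'e pmf"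
    and \<alpha> :: real and ord :: "(nat \<Rightarrow> real) \<Rightarrow> nat list"
  defines "\<pi> \<equiv> (\<lambda>i. prob_space.prob M {x \<in> space M. R x = i})"
  defines "LRvec \<equiv> (\<lambda>x j. if j \<in> {1..N} then LR S G (P j x) else 0)"
  assumes "prob_space M"
    and "N \<ge> 1"
    and "\<And>e. pmf S e > 0 \<Longrightarrow> pmf G e > 0"
    and "R \<in> measurable M (count_space UNIV)"
    and "\<And>x. x \<in> space M \<Longrightarrow> R x \<le> N"
    and "\<And>j. j \<in> {1..N} \<Longrightarrow> P j \<in> measurable M (count_space UNIV)"
    and "\<And>i (e :: nat \<Rightarrow> 'e). i \<le> N \<Longrightarrow>
           prob_space.prob M {x \<in> space M. R x = i \<and> (\<forall>j\<in>{1..N}. P j x = e j)}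
           = \<pi> i * (\<Prod>j\<in>{1..N}. if j = i then pmf S (e j) else pmf G (e j))"
    and "(\<Sum>i=1..N. \<pi> i) > 0"
    and "0 \<le> \<alpha>" and "\<alpha> \<le> 1"
    and "\<And>r. is_decr_order N \<pi> r (ord r)"
  shows "cond_prob M (\<lambda>x. R x \<in> D_alpha N \<pi> \<alpha> (LRvec x) (ord (LRvec x)))
                     (\<lambda>x. R x \<in> {1..N}) \<ge> \<alpha>
    \<and> (prob_space.prob M {x \<in> space M. R x \<in> {1..N}} = 1 \<longrightarrow>
         prob_space.prob M {x \<in> space M. R x \<in> D_alpha N \<pi> \<alpha> (LRvec x) (ord (LRvec x))} \<ge> \<alpha>)"
proof -
  interpret prob_space M by fact
  define X where "X = (\<lambda>x. map (\<lambda>k. P (Suc k) x) [0..<N])"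
  define rv where "rv = (\<lambda>l j. if j \<in> {1..N} then LR S G (l!(j-1)) else 0)"
  define Dl where "Dl = (\<lambda>l. D_alpha N \<pi> \<alpha> (rv l) (ord (rv l)))"
  define g where "g = (\<lambda>l. \<Prod>j\<in>{1..N}. pmf G (l!(j-1)))"
  define A where "A = (\<lambda>i l. {x\<in>space M. R x = i \<and> X x = l})"
  have Xlen: "length (X x) = N" for x by (simp add: X_def)
  have LRvec_eq: "LRvec x = rv (X x)" for x
  proof
    fix j show "LRvec x j = rv (X x) j"
      by (cases "j \<in> {1..N}") (auto simp: LRvec_def rv_def X_def)
  qed
  have Xeq: "X x = l \<longleftrightarrow> (\<forall>j\<in>{1..N}. P j x = l!(j-1))" if "length l = N" for x l
  proof -
    have "X x = l \<longleftrightarrow> (\<forall>k<N. P (Suc k) x = l!k)"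
      using that by (auto simp: X_def list_eq_iff_nth_eq)
    also have "\<dots> \<longleftrightarrow> (\<forall>j\<in>{1..N}. P j x = l!(j-1))"
    proof safe
      fix j assume "\<forall>k<N. P (Suc k) x = l ! k" "j \<in> {1..N}"
      then have "j - 1 < N" "Suc (j - 1) = j" by auto
      then show "P j x = l!(j-1)" using \<open>\<forall>k<N. P (Suc k) x = l ! k\<close> by metis
    next
      fix k assume "\<forall>j\<in>{1..N}. P j x = l!(j-1)" "k < N"
      then show "P (Suc k) x = l!k" by auto
    qed
    finally show ?thesis .
  qed
  have Rset: "{x\<in>space M. R x = i} \<in> sets M" for i
  proof -
    have "{x\<in>space M. R x = i} = R -` {i} \<inter> space M" by auto
    then show ?thesis using measurable_sets[OF assms(6)] by simp
  qed
  have Pset: "{x\<in>space M. P j x = c} \<in> sets M" if "j \<in> {1..N}" for j c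
  proof -
    have "{x\<in>space M. P j x = c} = P j -` {c} \<inter> space M" by auto
    then show ?thesis using measurable_sets[OF assms(8)[OF that]] by simp
  qed
  have A_sets: "A i l \<in> sets M" for i l
  proof (cases "length l = N")
    case True
    have "A i l = {x\<in>space M. R x = i} \<inter> {x\<in>space M. \<forall>j\<in>{1..N}. P j x = l!(j-1)}"
      using Xeq[OF True] by (auto simp: A_def)
    moreover have "{x\<in>space M. \<forall>j\<in>{1..N}. P j x = l!(j-1)} \<in> sets M"
      by (rule sets.sets_Collect_finite_All) (auto intro: Pset)
    ultimately show ?thesis using Rset by auto
  next
    case False
    then have "A i l = {}" using Xlen by (auto simp: A_def)
    then show ?thesis by simp
  qed
  have pi_nn: "\<pi> i \<ge> 0" for i by (simp add: \<pi>_def)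
  have LR_nn: "LR S G e \<ge> 0" for e by (simp add: LR_def)
  have rv_nn: "rv l j \<ge> 0" for l j by (simp add: rv_def LR_nn)
  have g_nn: "g l \<ge> 0" for l by (simp add: g_def prod_nonneg)
  have prod_eq: "(\<Prod>j\<in>{1..N}. if j = i then pmf S (e j) else pmf G (e j))
        = LR S G (e i) * (\<Prod>j\<in>{1..N}. pmf G (e j))" if i: "i \<in> {1..N}" for i and e :: "nat \<Rightarrow> 'e"
  proof -
    have "(\<Prod>j\<in>{1..N}. if j = i then pmf S (e j) else pmf G (e j))
        = pmf S (e i) * (\<Prod>j\<in>{1..N}-{i}. if j = i then pmf S (e j) else pmf G (e j))"
      using i by (subst prod.remove[of _ i]) auto
    also have "(\<Prod>j\<in>{1..N}-{i}. if j = i then pmf S (e j) else pmf G (e j)) = (\<Prod>j\<in>{1..N}-{i}. pmf G (e j))"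
      by (rule prod.cong) auto
    also have "(\<Prod>j\<in>{1..N}. pmf G (e j)) = pmf G (e i) * (\<Prod>j\<in>{1..N}-{i}. pmf G (e j))"
      using i by (subst prod.remove[of _ i]) auto
    moreover have "pmf S (e i) = LR S G (e i) * pmf G (e i)"
    proof (cases "pmf G (e i) > 0")
      case True then show ?thesis by (simp add: LR_def)
    next
      case False
      then have "pmf S (e i) = 0" using assms(5)[of "e i"] pmf_nonneg[of S "e i"] by linarith
      then show ?thesis using False by (simp add: LR_def)
    qed
    ultimately show ?thesis by simp
  qed
  have q: "emeasure M (A i l) = ennreal (\<pi> i * rv l i * g l)" if "length l = N" "i \<in> {1..N}" for i l
  proof -
    have "A i l = {x\<in>space M. R x = i \<and> (\<forall>j\<in>{1..N}. P j x = (\<lambda>j. l!(j-1)) j)}"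
      using Xeq[OF that(1)] by (auto simp: A_def)
    then have "measure M (A i l) = \<pi> i * (\<Prod>j\<in>{1..N}. if j = i then pmf S (l!(j-1)) else pmf G (l!(j-1)))"
      using assms(9)[of i "\<lambda>j. l!(j-1)"] that(2) by simp
    also have "\<dots> = \<pi> i * rv l i * g l"
      using prod_eq[OF that(2), of "\<lambda>j. l!(j-1)"] that(2) by (simp add: rv_def g_def)
    finally show ?thesis by (simp add: emeasure_eq_measure)
  qed
  have q0: "A i l = {}" if "length l \<noteq> N" for i l using that Xlen by (auto simp: A_def)
  have cs_ind: "(\<integral>\<^sup>+x. f x \<partial>count_space Y) = (\<integral>\<^sup>+x. f x * indicator Y x \<partial>count_space UNIV)"
    for f :: "'e list \<Rightarrow> ennreal" and Y
  proof (cases "Y = UNIV")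
    case True then show ?thesis by simp
  next
    case False then show ?thesis by (simp add: nn_integral_count_space_indicator)
  qed
  have F: "emeasure M (\<Union>i\<in>{1..N}. \<Union>l\<in>L i. A i l)
     = (\<integral>\<^sup>+l. (\<Sum>i\<in>{1..N}. emeasure M (A i l) * indicator (L i) l) \<partial>count_space UNIV)" for L
  proof -
    have "emeasure M (\<Union>i\<in>{1..N}. \<Union>l\<in>L i. A i l) = (\<Sum>i\<in>{1..N}. emeasure M (\<Union>l\<in>L i. A i l))"
    proof (rule sum_emeasure[symmetric])
      show "(\<lambda>i. \<Union>l\<in>L i. A i l) ` {1..N} \<subseteq> sets M"
        using A_sets by (auto intro!: sets.countable_UN')
      show "disjoint_family_on (\<lambda>i. \<Union>l\<in>L i. A i l) {1..N}"
        by (auto simp: disjoint_family_on_def A_def)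
    qed simp
    also have "\<dots> = (\<Sum>i\<in>{1..N}. \<integral>\<^sup>+l. emeasure M (A i l) \<partial>count_space (L i))"
      by (intro sum.cong refl emeasure_UN_countable) (auto simp: A_sets disjoint_family_on_def A_def[symmetric], auto simp: A_def)
    also have "\<dots> = (\<Sum>i\<in>{1..N}. \<integral>\<^sup>+l. emeasure M (A i l) * indicator (L i) l \<partial>count_space UNIV)"
      by (rule sum.cong[OF refl]) (rule cs_ind)
    also have "\<dots> = (\<integral>\<^sup>+l. (\<Sum>i\<in>{1..N}. emeasure M (A i l) * indicator (L i) l) \<partial>count_space UNIV)"
      by (rule nn_integral_sum[symmetric]) simp
    finally show ?thesis .
  qed
  define E1 where "E1 = {x\<in>space M. R x \<in> D_alpha N \<pi> \<alpha> (LRvec x) (ord (LRvec x)) \<and> R x \<in> {1..N}}"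
  define E2 where "E2 = {x\<in>space M. R x \<in> {1..N}}"
  have E1eq: "E1 = (\<Union>i\<in>{1..N}. \<Union>l\<in>{l. i \<in> Dl l}. A i l)"
    by (auto simp: E1_def A_def Dl_def LRvec_eq)
  have E2eq: "E2 = (\<Union>i\<in>{1..N}. \<Union>l\<in>UNIV. A i l)"
    by (auto simp: E2_def A_def)
  have Dsub: "Dl l \<subseteq> {1..N}" for l
    unfolding Dl_def by (rule key_Dalpha(1)[OF assms(13) rv_nn pi_nn assms(11,12)])
  have pw: "ennreal \<alpha> * (\<Sum>i\<in>{1..N}. emeasure M (A i l) * indicator UNIV l)
      \<le> (\<Sum>i\<in>{1..N}. emeasure M (A i l) * indicator {l. i \<in> Dl l} l)" for l
  proof (cases "length l = N")
    case False then show ?thesis by (simp add: q0)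
  next
    case True
    have "(\<Sum>i\<in>{1..N}. emeasure M (A i l) * indicator UNIV l) = ennreal (\<Sum>i\<in>{1..N}. \<pi> i * rv l i * g l)"
      using True by (simp add: q pi_nn rv_nn g_nn)
    moreover have "(\<Sum>i\<in>{1..N}. emeasure M (A i l) * indicator {l. i \<in> Dl l} l)
        = ennreal (\<Sum>i\<in>Dl l. \<pi> i * rv l i * g l)"
      using True Dsub[of l] by (simp add: q pi_nn rv_nn g_nn indicator_def sum.If_cases Int_absorb1 Int_absorb2)
    moreover have "\<alpha> * (\<Sum>i\<in>{1..N}. \<pi> i * rv l i * g l) \<le> (\<Sum>i\<in>Dl l. \<pi> i * rv l i * g l)"
    proof -
      have e1: "(\<Sum>i\<in>Dl l. \<pi> i * rv l i * g l) = g l * (\<Sum>i\<in>Dl l. rv l i * \<pi> i)" by (simp add: sum_distrib_left mult_ac)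
      have e2: "(\<Sum>i\<in>{1..N}. \<pi> i * rv l i * g l) = g l * (\<Sum>i=1..N. rv l i * \<pi> i)" by (simp add: sum_distrib_left mult_ac)
      have "\<alpha> * (\<Sum>i=1..N. rv l i * \<pi> i) \<le> (\<Sum>i\<in>Dl l. rv l i * \<pi> i)"
        unfolding Dl_def by (rule key_Dalpha(2)[OF assms(13) rv_nn pi_nn assms(11,12)])
      then have "g l * (\<alpha> * (\<Sum>i=1..N. rv l i * \<pi> i)) \<le> g l * (\<Sum>i\<in>Dl l. rv l i * \<pi> i)"
        by (rule mult_left_mono) (rule g_nn)
      then show ?thesis unfolding e1 e2 by (simp add: mult_ac)
    qed
    ultimately show ?thesis using assms(11) by (simp add: ennreal_mult''[symmetric] sum_nonneg pi_nn rv_nn g_nn)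
  qed
  have ineqE: "ennreal \<alpha> * emeasure M E2 \<le> emeasure M E1"
  proof -
    have "ennreal \<alpha> * emeasure M E2 = (\<integral>\<^sup>+l. ennreal \<alpha> * (\<Sum>i\<in>{1..N}. emeasure M (A i l) * indicator UNIV l) \<partial>count_space UNIV)"
      unfolding E2eq F by (rule nn_integral_cmult[symmetric]) simp
    also have "\<dots> \<le> (\<integral>\<^sup>+l. (\<Sum>i\<in>{1..N}. emeasure M (A i l) * indicator {l. i \<in> Dl l} l) \<partial>count_space UNIV)"
      by (rule nn_integral_mono) (rule pw)
    also have "\<dots> = emeasure M E1" unfolding E1eq F ..
    finally show ?thesis .
  qed
  have ineq: "\<alpha> * measure M E2 \<le> measure M E1"
    using ineqE assms(11) by (simp add: emeasure_eq_measure ennreal_mult''[symmetric])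
  have E2pos: "measure M E2 > 0"
  proof -
    have "E2 = (\<Union>i\<in>{1..N}. {x\<in>space M. R x = i})" by (auto simp: E2_def)
    then have "measure M E2 = (\<Sum>i\<in>{1..N}. \<pi> i)"
      unfolding \<pi>_def by (simp, intro measure_finite_Union) (auto simp: Rset disjoint_family_on_def)
    then show ?thesis using assms(10) by simp
  qed
  have c1: "cond_prob M (\<lambda>x. R x \<in> D_alpha N \<pi> \<alpha> (LRvec x) (ord (LRvec x))) (\<lambda>x. R x \<in> {1..N}) \<ge> \<alpha>"
    unfolding cond_prob_def E1_def[symmetric] E2_def[symmetric]
    using ineq E2pos by (simp add: le_divide_eq)
  have E1': "{x \<in> space M. R x \<in> D_alpha N \<pi> \<alpha> (LRvec x) (ord (LRvec x))} = E1"
    using Dsub unfolding E1_def LRvec_eq Dl_def by blast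
  show ?thesis
    using c1 ineq unfolding E1' E2_def[symmetric] by auto
qed

end
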